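(* Let $(P,Q,n)$ be a CI-problem over a field $\mathbb{K}$, and let the intervals $\mathcal I_i,\mathcal J_j\subseteq\mathbf{Z}^2$ ($1\le i,j\le n$) and the integer $m=|P|+|Q|$ be as constructed in the context. If $(i,j)\notin P$, then $\mathrm{Hom}(I^{\mathcal I_i},I^{\mathcal J_j}(1))\cong\mathbb{K}$; more precisely, every morphism $f:I^{\mathcal I_i}\to I^{\mathcal J_j}(1)$ is determined by $f_{(2m+1,2m+1)}\in\mathbb{K}$, and for every $p\in\mathbf{Z}^2$, either $f_p=0$ or $f_p=f_{(2m+1,2m+1)}$. Symmetrically, if $(j,i)\notin Q$, then $\mathrm{Hom}(I^{\mathcal J_j},I^{\mathcal I_i}(1))\cong\mathbb{K}$ with every morphism $g$ determined by $g_{(2m+1,2m+1)}$ and $g_p\in\{0,g_{(2m+1,2m+1)}\}$ for all $p$.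
   Context: A constrained invertibility (CI) problem is a triple $(P,Q,n)$ with $P,Q\subseteq\{1,\dots,n\}^2$; it is solvable if there is an invertible $n\times n$ matrix $A$ over $\mathbb{K}$ with $A_{i,j}=0$ for all $(i,j)\in P$ and $(A^{-1})_{i',j'}=0$ for all $(i',j')\in Q$. Modules are functors $\mathbf{Z}^2\to\mathbf{Vec}_{\mathbb{K}}$ with the product order on $\mathbf{Z}^2$; $M(1)$ denotes the shift $M(1)_a=M_{a+(1,1)}$. For an interval $\mathcal J\subseteq\mathbf{Z}^2$, $I^{\mathcal J}$ is the interval module ($\mathbb{K}$ on $\mathcal J$, $0$ elsewhere, identity maps within $\mathcal J$, zero otherwise). Construction: let $m=|P|+|Q|$. For $p\in\mathbf{Z}^2$ let $\langle p\rangle=\{q\in\mathbf{Z}^2: p\le q\le(2m+2,2m+2)\}$. Let $\mathcal W=\bigcup_{k=0}^m\langle(2m-2k,2k)\rangle$ and $x_k=(2m-2k+1,2k-1)$ for $k=1,\dots,m$. Enumerate $P=\{(p_1,q_1),\dots,(p_r,q_r)\}$ and $Q=\{(p_{r+1},q_{r+1}),\dots,(p_m,q_m)\}$. Set $\mathcal I_i^0=\mathcal J_i^0=\mathcal W$ for all $i$. For $k=1,\dots,r$: $\mathcal I_i^k=\mathcal I_i^{k-1}\cup\langle x_k-(1,1)\rangle$ if $i=p_k$, else $\mathcal I_i^{k-1}\cup\langle x_k\rangle$; $\mathcal J_i^k=\mathcal J_i^{k-1}$ if $i=q_k$, else $\mathcal J_i^{k-1}\cup\langle x_k\rangle$. For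 $k=r+1,\dots,m$: $\mathcal I_i^k=\mathcal I_i^{k-1}$ if $i=q_k$, else $\mathcal I_i^{k-1}\cup\langle x_k\rangle$; $\mathcal J_i^k=\mathcal J_i^{k-1}\cup\langle x_k-(1,1)\rangle$ if $i=p_k$, else $\mathcal J_i^{k-1}\cup\langle x_k\rangle$. Finally $\mathcal I_i=\mathcal I_i^m$, $\mathcal J_i=\mathcal J_i^m$. *)

theory Defs
  imports Main
begin

definition le2 :: "int \<times> int \<Rightarrow> int \<times> int \<Rightarrow> bool" where
  "le2 p q \<longleftrightarrow> fst p \<le> fst q \<and> snd p \<le> snd q"

text \<open>A Z^2-module whose component at p is a subspace sp M p of the field K
  (viewed as a 1-dimensional K-vector space), with structure maps mp M p q for p \<le> q.
  Interval modules and their shifts are of this form.\<close>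
record 'k pmod =
  sp :: "int \<times> int \<Rightarrow> 'k set"
  mp :: "int \<times> int \<Rightarrow> int \<times> int \<Rightarrow> 'k \<Rightarrow> 'k"

text \<open>Morphisms (natural transformations) M \<Rightarrow> N: families of K-linear maps
  f p : sp M p \<rightarrow> sp N p (extensional, i.e. 0 outside sp M p) commuting with structure maps.\<close>
definition Hom :: "'k::field pmod \<Rightarrow> 'k pmod \<Rightarrow> (int \<times> int \<Rightarrow> 'k \<Rightarrow> 'k) set" where
  "Hom M N = {f.
     (\<forall>p x. x \<in> sp M p \<longrightarrow> f p x \<in> sp N p) \<and>
     (\<forall>p x. x \<notin> sp M p \<longrightarrow> f p x = 0) \<and>
     (\<forall>p x y. x \<in> sp M p \<longrightarrow> y \<in> sp M p \<longrightarrow> f p (x + y) = f p x + f p y) \<and>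
     (\<forall>p a x. x \<in> sp M p \<longrightarrow> f p (a * x) = a * f p x) \<and>
     (\<forall>p q x. le2 p q \<longrightarrow> x \<in> sp M p \<longrightarrow> f q (mp M p q x) = mp N p q (f p x))}"

definition interval_module :: "(int \<times> int) set \<Rightarrow> 'k::field pmod" where
  "interval_module A =
     \<lparr> sp = (\<lambda>p. if p \<in> A then UNIV else {0}),
       mp = (\<lambda>p q x. if p \<in> A \<and> q \<in> A then x else 0) \<rparr>"

definition shift1 :: "'k pmod \<Rightarrow> 'k pmod" where
  "shift1 M =
     \<lparr> sp = (\<lambda>p. sp M (fst p + 1, snd p + 1)),
       mp = (\<lambda>p q. mp M (fst p + 1, snd p + 1) (fst q + 1, snd q + 1)) \<rparr>"

definition upset :: "nat \<Rightarrow> int \<times> int \<Rightarrow> (int \<times> int) set" where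
  "upset m p = {q. le2 p q \<and> le2 q (2 * int m + 2, 2 * int m + 2)}"

definition Wset :: "nat \<Rightarrow> (int \<times> int) set" where
  "Wset m = (\<Union>k\<in>{0..m}. upset m (2 * int m - 2 * int k, 2 * int k))"

definition xpt :: "nat \<Rightarrow> nat \<Rightarrow> int \<times> int" where
  "xpt m k = (2 * int m - 2 * int k + 1, 2 * int k - 1)"

definition mm1 :: "int \<times> int \<Rightarrow> int \<times> int" where
  "mm1 p = (fst p - 1, snd p - 1)"

text \<open>e enumerates: e 1..e r are the elements of P, e (r+1)..e m those of Q;
  e k = (p_k, q_k).  CI_I e r m i k = I_i^k and CI_J e r m i k = J_i^k.\<close>
primrec CI_I :: "(nat \<Rightarrow> nat \<times> nat) \<Rightarrow> nat \<Rightarrow> nat \<Rightarrow> nat \<Rightarrow> nat \<Rightarrow> (int \<times> int) set" where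
  "CI_I e r m i 0 = Wset m"
| "CI_I e r m i (Suc k) =
     (if Suc k \<le> r then
        (if i = fst (e (Suc k)) then CI_I e r m i k \<union> upset m (mm1 (xpt m (Suc k)))
         else CI_I e r m i k \<union> upset m (xpt m (Suc k)))
      else
        (if i = snd (e (Suc k)) then CI_I e r m i k
         else CI_I e r m i k \<union> upset m (xpt m (Suc k))))"

primrec CI_J :: "(nat \<Rightarrow> nat \<times> nat) \<Rightarrow> nat \<Rightarrow> nat \<Rightarrow> nat \<Rightarrow> nat \<Rightarrow> (int \<times> int) set" where
  "CI_J e r m i 0 = Wset m"
| "CI_J e r m i (Suc k) =
     (if Suc k \<le> r then
        (if i = snd (e (Suc k)) then CI_J e r m i k
         else CI_J e r m i k \<union> upset m (xpt m (Suc k)))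
      else
        (if i = fst (e (Suc k)) then CI_J e r m i k \<union> upset m (mm1 (xpt m (Suc k)))
         else CI_J e r m i k \<union> upset m (xpt m (Suc k))))"

end

theory Submission
  imports Defs
begin


abbreviation sh :: "int \<times> int \<Rightarrow> int \<times> int" where "sh p \<equiv> (fst p + 1, snd p + 1)"

lemma sp_int: "sp (interval_module A :: 'k::field pmod) p = (if p \<in> A then UNIV else {0})"
  by (simp add: interval_module_def)
lemma mp_int: "mp (interval_module A :: 'k::field pmod) p q x = (if p \<in> A \<and> q \<in> A then x else 0)"
  by (simp add: interval_module_def)
lemma sp_sh: "sp (shift1 (interval_module B) :: 'k::field pmod) p = (if sh p \<in> B then UNIV else {0})"
  by (simp add: interval_module_def shift1_def)
lemma mp_sh: "mp (shift1 (interval_module B) :: 'k::field pmod) p q x = (if sh p \<in> B \<and> sh q \<in> B then x else 0)"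
  by (simp add: interval_module_def shift1_def)

lemma hom_char:
  fixes A B :: "(int \<times> int) set" and c :: "int \<times> int" and f :: "int \<times> int \<Rightarrow> 'k::field \<Rightarrow> 'k"
  assumes Bb: "\<And>p. sh p \<in> B \<Longrightarrow> le2 p c"
    and cA: "c \<in> A" and cB: "sh c \<in> B"
    and f: "f \<in> Hom (interval_module A) (shift1 (interval_module B))"
  shows "f p x = (if p \<in> A \<and> sh p \<in> B then x * f c 1 else 0)"
proof -
  let ?M = "interval_module A :: 'k pmod" and ?N = "shift1 (interval_module B) :: 'k pmod"
  have g1: "\<And>p x. x \<in> sp ?M p \<Longrightarrow> f p x \<in> sp ?N p"
   and g2: "\<And>p x. x \<notin> sp ?M p \<Longrightarrow> f p x = 0"
   and g4: "\<And>p a x. x \<in> sp ?M p \<Longrightarrow> f p (a * x) = a * f p x"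
   and g5: "\<And>p q x. le2 p q \<Longrightarrow> x \<in> sp ?M p \<Longrightarrow> f q (mp ?M p q x) = mp ?N p q (f p x)"
    using f unfolding Hom_def by blast+
  have spM: "sp ?M p = (if p \<in> A then UNIV else {0})" for p by (simp add: interval_module_def)
  have spN: "sp ?N p = (if sh p \<in> B then UNIV else {0})" for p by (simp add: interval_module_def shift1_def)
  have mpM: "mp ?M p q x = (if p \<in> A \<and> q \<in> A then x else 0)" for p q x by (simp add: interval_module_def)
  have mpN: "mp ?N p q x = (if sh p \<in> B \<and> sh q \<in> B then x else 0)" for p q x by (simp add: interval_module_def shift1_def)
  have f1: "\<And>p x. x \<in> (if p \<in> A then UNIV else {0}) \<Longrightarrow> f p x \<in> (if sh p \<in> B then UNIV else {0})"
    using g1 unfolding spM spN .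
  have f2: "\<And>p x. x \<notin> (if p \<in> A then UNIV else {0}) \<Longrightarrow> f p x = 0"
    using g2 unfolding spM .
  have f4: "\<And>p a x. x \<in> (if p \<in> A then UNIV else {0}) \<Longrightarrow> f p (a * x) = a * f p x"
    using g4 unfolding spM .
  have f5: "\<And>p q x. le2 p q \<Longrightarrow> x \<in> (if p \<in> A then UNIV else {0}) \<Longrightarrow>
       f q (if p \<in> A \<and> q \<in> A then x else 0) = (if sh p \<in> B \<and> sh q \<in> B then f p x else 0)"
    using g5 unfolding spM mpM mpN .
  have fc: "f c y = y * f c 1" for y using f4[where p=c and a=y and x=1] cA by simp
  show ?thesis
  proof (cases "p \<in> A \<and> sh p \<in> B")
    case True
    have "le2 p c" using Bb True by blast
    from f5[OF this, of x] True cA cB have "f c x = f p x" by simp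
    then show ?thesis using True fc[of x] by simp
  next
    case False
    show ?thesis
    proof (cases "p \<in> A")
      case True
      then show ?thesis using f1[where p=p and x=x] False by auto
    next
      case nA: False
      show ?thesis
      proof (cases "x = 0")
        case True
        then show ?thesis using f4[where p=p and a=0 and x=0] nA by simp
      qed (use f2 nA in auto)
    qed
  qed
qed

lemma hom_generic:
  fixes A B :: "(int \<times> int) set" and c :: "int \<times> int"
  assumes upA: "\<And>p q. p \<in> A \<Longrightarrow> le2 p q \<Longrightarrow> le2 q c \<Longrightarrow> q \<in> A"
    and Bb: "\<And>p. sh p \<in> B \<Longrightarrow> le2 p c"
    and key: "\<And>p. p \<in> A \<Longrightarrow> le2 p c \<Longrightarrow> sh p \<in> B"
    and cA: "c \<in> A"
  shows "bij_betw (\<lambda>f. f c 1) (Hom (interval_module A) (shift1 (interval_module B))) (UNIV::'k::field set) \<and>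
    (\<forall>f\<in>Hom (interval_module A) (shift1 (interval_module B)). \<forall>p. f p = (\<lambda>_. (0::'k)) \<or> f p = f c)"
proof -
  have cc: "le2 c c" by (simp add: le2_def)
  have cB: "sh c \<in> B" using key[OF cA cc] .
  let ?H = "Hom (interval_module A) (shift1 (interval_module B)) :: (int \<times> int \<Rightarrow> 'k \<Rightarrow> 'k) set"
  have ch: "\<And>f p x. f \<in> ?H \<Longrightarrow> f p x = (if p \<in> A \<and> sh p \<in> B then x * f c 1 else 0)"
    by (rule hom_char[OF Bb cA cB])
  have inj: "inj_on (\<lambda>f. f c 1) ?H"
  proof (rule inj_onI)
    fix f g assume fH: "f \<in> ?H" and gH: "g \<in> ?H" and eq: "f c 1 = g c 1"
    show "f = g"
    proof (intro ext)
      fix p x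
      have e1: "f p x = (if p \<in> A \<and> sh p \<in> B then x * f c 1 else 0)" by (rule ch[OF fH])
      have e2: "g p x = (if p \<in> A \<and> sh p \<in> B then x * g c 1 else 0)" by (rule ch[OF gH])
      show "f p x = g p x" by (subst e1, subst e2, subst eq, rule refl)
    qed
  qed
  have surj: "a \<in> (\<lambda>f. f c 1) ` ?H" for a :: 'k
  proof -
    define f where "f = (\<lambda>p (x::'k). if p \<in> A \<and> sh p \<in> B then a * x else 0)"
    have "f \<in> ?H"
    proof -
      have nat: "f q (if p \<in> A \<and> q \<in> A then x else 0) = (if sh p \<in> B \<and> sh q \<in> B then f p x else 0)"
        if pq: "le2 p q" and x: "x \<in> (if p \<in> A then UNIV else {0})" for p q x
      proof (cases "p \<in> A")
        case False
        then have "x = 0" using x by simp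
        then show ?thesis using False by (simp add: f_def)
      next
        case pA: True
        show ?thesis
        proof (cases "q \<in> A")
          case False
          have "\<not> sh q \<in> B" using False upA[OF pA pq] Bb[of q] by blast
          then show ?thesis using False by (simp add: f_def)
        next
          case True
          have "sh q \<in> B \<Longrightarrow> sh p \<in> B"
          proof -
            assume "sh q \<in> B"
            then have "le2 q c" by (rule Bb)
            then have "le2 p c" using pq by (auto simp: le2_def)
            then show "sh p \<in> B" using key pA by blast
          qed
          then show ?thesis using True pA by (auto simp: f_def)
        qed
      qed
      have c1: "\<forall>p x. x \<in> (if p \<in> A then UNIV else {0}) \<longrightarrow> f p x \<in> (if sh p \<in> B then UNIV else {0})"
        by (simp add: f_def)
      have c2: "\<forall>p x. x \<notin> (if p \<in> A then UNIV else {0}) \<longrightarrow> f p x = 0"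
        by (simp add: f_def)
      have c3: "\<forall>p x y. x \<in> (if p \<in> A then UNIV else {0}) \<longrightarrow> y \<in> (if p \<in> A then UNIV else {0}) \<longrightarrow> f p (x + y) = f p x + f p y"
        by (simp add: f_def distrib_left)
      have c4: "\<forall>p b x. x \<in> (if p \<in> A then UNIV else {0}) \<longrightarrow> f p (b * x) = b * f p x"
        by (simp add: f_def mult.left_commute)
      have c5: "\<forall>p q x. le2 p q \<longrightarrow> x \<in> (if p \<in> A then UNIV else {0}) \<longrightarrow> f q (if p \<in> A \<and> q \<in> A then x else 0) = (if sh p \<in> B \<and> sh q \<in> B then f p x else 0)"
        using nat by blast
      show "f \<in> ?H"
        unfolding Hom_def mem_Collect_eq sp_int mp_int sp_sh mp_sh
        using c1 c2 c3 c4 c5 by (intro CollectI conjI)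
    qed
    moreover have "f c 1 = a" using cA cB by (simp add: f_def)
    ultimately show ?thesis by force
  qed
  have "bij_betw (\<lambda>f. f c 1) ?H UNIV"
    unfolding bij_betw_def using inj surj by auto
  moreover have "\<forall>f\<in>?H. \<forall>p. f p = (\<lambda>_. 0) \<or> f p = f c"
  proof (intro ballI allI)
    fix f p assume fH: "f \<in> ?H"
    have fx: "\<And>q x. f q x = (if q \<in> A \<and> sh q \<in> B then x * f c 1 else 0)" by (rule ch[OF fH])
    have cAB: "c \<in> A \<and> sh c \<in> B" using cA cB by blast
    show "f p = (\<lambda>_. 0) \<or> f p = f c"
    proof (cases "p \<in> A \<and> sh p \<in> B")
      case True
      have "f p x = f c x" for x using fx[of p x] fx[of c x] unfolding if_P[OF True] if_P[OF cAB] by (rule trans[OF _ sym])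
      then show ?thesis by blast
    next
      case False
      have "f p x = 0" for x using fx[of p x] unfolding if_not_P[OF False] .
      then show ?thesis by blast
    qed
  qed
  ultimately show ?thesis by blast
qed


lemma upset_up: "p \<in> upset m a \<Longrightarrow> le2 p q \<Longrightarrow> le2 q (2 * int m + 2, 2 * int m + 2) \<Longrightarrow> q \<in> upset m a"
  unfolding upset_def le2_def by auto

lemma W_up: "p \<in> Wset m \<Longrightarrow> le2 p q \<Longrightarrow> le2 q (2 * int m + 2, 2 * int m + 2) \<Longrightarrow> q \<in> Wset m"
  unfolding Wset_def using upset_up by blast

lemma I_up: "p \<in> CI_I e r m i k \<Longrightarrow> le2 p q \<Longrightarrow> le2 q (2 * int m + 2, 2 * int m + 2) \<Longrightarrow> q \<in> CI_I e r m i k"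
  by (induction k) (auto simp del: upset_def intro: W_up upset_up split: if_splits)

lemma J_up: "p \<in> CI_J e r m i k \<Longrightarrow> le2 p q \<Longrightarrow> le2 q (2 * int m + 2, 2 * int m + 2) \<Longrightarrow> q \<in> CI_J e r m i k"
  by (induction k) (auto intro: W_up upset_up split: if_splits)

lemma upset_bound: "p \<in> upset m a \<Longrightarrow> le2 p (2 * int m + 2, 2 * int m + 2)"
  unfolding upset_def by auto

lemma W_bound: "p \<in> Wset m \<Longrightarrow> le2 p (2 * int m + 2, 2 * int m + 2)"
  unfolding Wset_def using upset_bound by blast

lemma I_bound: "p \<in> CI_I e r m i k \<Longrightarrow> le2 p (2 * int m + 2, 2 * int m + 2)"
  by (induction k) (auto intro: W_bound upset_bound split: if_splits)

lemma J_bound: "p \<in> CI_J e r m i k \<Longrightarrow> le2 p (2 * int m + 2, 2 * int m + 2)"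
  by (induction k) (auto intro: W_bound upset_bound split: if_splits)

lemma W_I: "Wset m \<subseteq> CI_I e r m i k"
  by (induction k) auto

lemma W_J: "Wset m \<subseteq> CI_J e r m i k"
  by (induction k) auto

lemma c_W: "(2 * int m + 1, 2 * int m + 1) \<in> Wset m"
  unfolding Wset_def upset_def le2_def
  by (rule UN_I[of 0]) auto

lemma I_mono: "k \<le> l \<Longrightarrow> CI_I e r m i k \<subseteq> CI_I e r m i l"
  by (rule lift_Suc_mono_le[of "CI_I e r m i"]) auto

lemma J_mono: "k \<le> l \<Longrightarrow> CI_J e r m i k \<subseteq> CI_J e r m i l"
  by (rule lift_Suc_mono_le[of "CI_J e r m i"]) auto

lemma shift_W: "p \<in> Wset m \<Longrightarrow> le2 p (2 * int m + 1, 2 * int m + 1) \<Longrightarrow> sh p \<in> Wset m"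
  unfolding Wset_def upset_def le2_def by fastforce

lemma shift_x:
  assumes "1 \<le> k" "k \<le> m" "p \<in> upset m (xpt m k)" "le2 p (2 * int m + 1, 2 * int m + 1)"
  shows "sh p \<in> Wset m"
proof -
  have "sh p \<in> upset m (2 * int m - 2 * int (k - 1), 2 * int (k - 1))"
    using assms unfolding upset_def le2_def xpt_def by (auto simp: of_nat_diff)
  moreover have "k - 1 \<in> {0..m}" using assms by auto
  ultimately show ?thesis unfolding Wset_def by blast
qed

lemma shift_box: "p \<in> upset m (mm1 (xpt m k)) \<Longrightarrow> le2 p (2 * int m + 1, 2 * int m + 1) \<Longrightarrow> sh p \<in> upset m (xpt m k)"
  unfolding upset_def le2_def mm1_def xpt_def by auto

lemma upset_box: "upset m (xpt m k) \<subseteq> upset m (mm1 (xpt m k))"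
  unfolding upset_def le2_def mm1_def xpt_def by auto

lemma xJ: "1 \<le> k \<Longrightarrow> \<not>(k \<le> r \<and> j = snd (e k)) \<Longrightarrow> upset m (xpt m k) \<subseteq> CI_J e r m j k"
  by (cases k) (use upset_box in auto)

lemma xI: "1 \<le> k \<Longrightarrow> \<not>(\<not> k \<le> r \<and> i = snd (e k)) \<Longrightarrow> upset m (xpt m k) \<subseteq> CI_I e r m i k"
  by (cases k) (use upset_box in auto)

lemma keyIJ:
  assumes nP: "\<forall>k\<in>{1..r}. e k \<noteq> (i, j)"
  shows "k \<le> m \<Longrightarrow> p \<in> CI_I e r m i k \<Longrightarrow> le2 p (2 * int m + 1, 2 * int m + 1) \<Longrightarrow> sh p \<in> CI_J e r m j m"
proof (induction k arbitrary: p)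
  case 0
  then have "sh p \<in> Wset m" using shift_W by simp
  then show ?case using W_J by blast
next
  case (Suc k)
  have km: "k \<le> m" using Suc.prems by simp
  consider (old) "p \<in> CI_I e r m i k"
    | (box) "Suc k \<le> r" "i = fst (e (Suc k))" "p \<in> upset m (mm1 (xpt m (Suc k)))"
    | (x) "p \<in> upset m (xpt m (Suc k))"
    using Suc.prems(2) by (auto split: if_splits)
  then show ?case
  proof cases
    case old then show ?thesis using Suc km by blast
  next
    case box
    have "j \<noteq> snd (e (Suc k))"
    proof
      assume "j = snd (e (Suc k))"
      then have "e (Suc k) = (i, j)" using box by (metis prod.collapse)
      moreover have "Suc k \<in> {1..r}" using box by auto
      ultimately show False using nP by blast
    qed
    then have "upset m (xpt m (Suc k)) \<subseteq> CI_J e r m j (Suc k)" using xJ[of "Suc k" r j e m] by auto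
    moreover have "CI_J e r m j (Suc k) \<subseteq> CI_J e r m j m" using Suc.prems(1) J_mono by blast
    moreover have "sh p \<in> upset m (xpt m (Suc k))" using shift_box box(3) Suc.prems(3) by blast
    ultimately show ?thesis by blast
  next
    case x
    then have "sh p \<in> Wset m" using shift_x[of "Suc k" m p] Suc.prems by auto
    then show ?thesis using W_J by blast
  qed
qed

lemma keyJI:
  assumes nQ: "\<forall>k\<in>{r+1..m}. e k \<noteq> (j, i)"
  shows "k \<le> m \<Longrightarrow> p \<in> CI_J e r m j k \<Longrightarrow> le2 p (2 * int m + 1, 2 * int m + 1) \<Longrightarrow> sh p \<in> CI_I e r m i m"
proof (induction k arbitrary: p)
  case 0
  then have "sh p \<in> Wset m" using shift_W by simp
  then show ?case using W_I by blast
next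
  case (Suc k)
  have km: "k \<le> m" using Suc.prems by simp
  consider (old) "p \<in> CI_J e r m j k"
    | (box) "\<not> Suc k \<le> r" "j = fst (e (Suc k))" "p \<in> upset m (mm1 (xpt m (Suc k)))"
    | (x) "p \<in> upset m (xpt m (Suc k))"
    using Suc.prems(2) by (auto split: if_splits)
  then show ?case
  proof cases
    case old then show ?thesis using Suc km by blast
  next
    case box
    have "i \<noteq> snd (e (Suc k))"
    proof
      assume "i = snd (e (Suc k))"
      then have "e (Suc k) = (j, i)" using box by (metis prod.collapse)
      moreover have "Suc k \<in> {r+1..m}" using box Suc.prems(1) by auto
      ultimately show False using nQ by blast
    qed
    then have "upset m (xpt m (Suc k)) \<subseteq> CI_I e r m i (Suc k)" using xI[of "Suc k" r i e m] by auto
    moreover have "CI_I e r m i (Suc k) \<subseteq> CI_I e r m i m" using Suc.prems(1) I_mono by blast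
    moreover have "sh p \<in> upset m (xpt m (Suc k))" using shift_box box(3) Suc.prems(3) by blast
    ultimately show ?thesis by blast
  next
    case x
    then have "sh p \<in> Wset m" using shift_x[of "Suc k" m p] Suc.prems by auto
    then show ?thesis using W_I by blast
  qed
qed

lemma le2_shift: "le2 (sh p) (2 * int m + 2, 2 * int m + 2) \<Longrightarrow> le2 p (2 * int m + 1, 2 * int m + 1)"
  unfolding le2_def by auto

lemma le2_c_T: "le2 q (2 * int m + 1, 2 * int m + 1) \<Longrightarrow> le2 q (2 * int m + 2, 2 * int m + 2)"
  unfolding le2_def by auto


theorem mainTheorem5:
  fixes P Q :: "(nat \<times> nat) set" and n :: nat and e :: "nat \<Rightarrow> nat \<times> nat"
    and i j :: nat
  assumes "P \<subseteq> {1..n} \<times> {1..n}" and "Q \<subseteq> {1..n} \<times> {1..n}"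
    and "bij_betw e {1..card P} P"
    and "bij_betw e {card P + 1..card P + card Q} Q"
    and "i \<in> {1..n}" and "j \<in> {1..n}"
  shows "let r = card P; m = card P + card Q; c = (2 * int m + 1, 2 * int m + 1);
             Ii = CI_I e r m i m; Jj = CI_J e r m j m in
         ((i, j) \<notin> P \<longrightarrow>
            bij_betw (\<lambda>f. f c 1)
              (Hom (interval_module Ii) (shift1 (interval_module Jj))) (UNIV :: 'k::field set) \<and>
            (\<forall>f \<in> Hom (interval_module Ii) (shift1 (interval_module Jj)).
               \<forall>p. f p = (\<lambda>_. (0::'k)) \<or> f p = f c)) \<and>
         ((j, i) \<notin> Q \<longrightarrow>
            bij_betw (\<lambda>g. g c 1)
              (Hom (interval_module Jj) (shift1 (interval_module Ii))) (UNIV :: 'k set) \<and>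
            (\<forall>g \<in> Hom (interval_module Jj) (shift1 (interval_module Ii)).
               \<forall>p. g p = (\<lambda>_. (0::'k)) \<or> g p = g c))"
proof -
  let ?r = "card P" and ?m = "card P + card Q"
  let ?c = "(2 * int ?m + 1, 2 * int ?m + 1)"
  let ?I = "CI_I e ?r ?m i ?m" and ?J = "CI_J e ?r ?m j ?m"
  have eP: "e ` {1..?r} = P" using assms(3) by (rule bij_betw_imp_surj_on)
  have eQ: "e ` {?r+1..?m} = Q" using assms(4) by (rule bij_betw_imp_surj_on)
  have cI: "?c \<in> ?I" using c_W W_I by blast
  have cJ: "?c \<in> ?J" using c_W W_J by blast
  have part1: "bij_betw (\<lambda>f. f ?c 1) (Hom (interval_module ?I) (shift1 (interval_module ?J))) (UNIV :: 'k::field set) \<and>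
     (\<forall>f \<in> Hom (interval_module ?I) (shift1 (interval_module ?J)). \<forall>p. f p = (\<lambda>_. (0::'k)) \<or> f p = f ?c)"
    if nP: "(i, j) \<notin> P"
  proof (rule hom_generic)
    show "\<And>p q. p \<in> ?I \<Longrightarrow> le2 p q \<Longrightarrow> le2 q ?c \<Longrightarrow> q \<in> ?I"
      by (rule I_up, assumption, assumption, rule le2_c_T)
    show "\<And>p. sh p \<in> ?J \<Longrightarrow> le2 p ?c"
      by (rule le2_shift, rule J_bound)
    have nk: "\<forall>k\<in>{1..?r}. e k \<noteq> (i, j)"
    proof
      fix k assume "k \<in> {1..?r}"
      then have "e k \<in> P" using eP by blast
      then show "e k \<noteq> (i, j)" using nP by metis
    qed
    show "\<And>p. p \<in> ?I \<Longrightarrow> le2 p ?c \<Longrightarrow> sh p \<in> ?J"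
      by (rule keyIJ[OF nk le_refl])
    show "?c \<in> ?I" by (rule cI)
  qed
  have part2: "bij_betw (\<lambda>f. f ?c 1) (Hom (interval_module ?J) (shift1 (interval_module ?I))) (UNIV :: 'k::field set) \<and>
     (\<forall>f \<in> Hom (interval_module ?J) (shift1 (interval_module ?I)). \<forall>p. f p = (\<lambda>_. (0::'k)) \<or> f p = f ?c)"
    if nQ: "(j, i) \<notin> Q"
  proof (rule hom_generic)
    show "\<And>p q. p \<in> ?J \<Longrightarrow> le2 p q \<Longrightarrow> le2 q ?c \<Longrightarrow> q \<in> ?J"
      by (rule J_up, assumption, assumption, rule le2_c_T)
    show "\<And>p. sh p \<in> ?I \<Longrightarrow> le2 p ?c"
      by (rule le2_shift, rule I_bound)
    have nk: "\<forall>k\<in>{?r+1..?m}. e k \<noteq> (j, i)"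
    proof
      fix k assume "k \<in> {?r+1..?m}"
      then have "e k \<in> Q" using eQ by blast
      then show "e k \<noteq> (j, i)" using nQ by metis
    qed
    show "\<And>p. p \<in> ?J \<Longrightarrow> le2 p ?c \<Longrightarrow> sh p \<in> ?I"
      by (rule keyJI[OF nk le_refl])
    show "?c \<in> ?J" by (rule cJ)
  qed
  show ?thesis unfolding Let_def using part1 part2 by blast
qed

end
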